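(* Let $G$ be a finite group of even order and let $\mathcal{F}$ be a $1$-rotational $k$-factorization of $K_{\overline{G}}$. Then for every $F\in\mathcal{F}$, the $G$-stabilizer of $F$ contains at least one element of every conjugacy class of $G$ that contains involutions.
   Context: For a finite group $G$, $\overline{G}=G\cup\{\infty\}$, and $K_V$ denotes the complete graph on vertex set $V$. $G$ acts on $\overline{G}$ by right multiplication, with $\infty g=\infty$ for all $g\in G$; for a subgraph $F$ of $K_{\overline{G}}$ and $g\in G$, $Fg$ is the graph obtained by replacing every vertex $v$ by $vg$. A $k$-factor of $K_V$ is a spanning $k$-regular subgraph, and a $k$-factorization is a set of $k$-factors whose edge sets partition the edge set of $K_V$. A $k$-factorization $\mathcal{F}$ of $K_{\overline{G}}$ is $1$-rotational if $Fg\in\mathcal{F}$ for all $F\in\mathcal{F}$ and $g\in G$. The $G$-stabilizer of a factor $F$ is $\{g\in G: Fg=F\}$. An involution is an element of order $2$. *)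

theory Defs
  imports "HOL-Algebra.Algebra"
begin

text \<open>Vertices of K over G-bar: Some g for g in G, None for infinity.
  A spanning subgraph of the complete graph is represented by its edge set
  (edges are 2-element sets of vertices).\<close>

definition vert :: "('a, 'b) monoid_scheme \<Rightarrow> 'a option set" where
  "vert G = Some ` carrier G \<union> {None}"

definition complete_edges :: "'v set \<Rightarrow> 'v set set" where
  "complete_edges V = {e. \<exists>u v. u \<in> V \<and> v \<in> V \<and> u \<noteq> v \<and> e = {u, v}}"

definition degree :: "'v set set \<Rightarrow> 'v \<Rightarrow> nat" where
  "degree F v = card {e \<in> F. v \<in> e}"

definition is_k_factor :: "nat \<Rightarrow> 'v set \<Rightarrow> 'v set set \<Rightarrow> bool" where
  "is_k_factor k V F \<longleftrightarrow> F \<subseteq> complete_edges V \<and> (\<forall>v\<in>V. degree F v = k)"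

definition is_k_factorization :: "nat \<Rightarrow> 'v set \<Rightarrow> 'v set set set \<Rightarrow> bool" where
  "is_k_factorization k V FF \<longleftrightarrow>
     (\<forall>F\<in>FF. is_k_factor k V F) \<and> \<Union>FF = complete_edges V \<and>
     (\<forall>F1\<in>FF. \<forall>F2\<in>FF. F1 \<noteq> F2 \<longrightarrow> F1 \<inter> F2 = {})"

definition vact :: "('a, 'b) monoid_scheme \<Rightarrow> 'a option \<Rightarrow> 'a \<Rightarrow> 'a option" where
  "vact G v g = map_option (\<lambda>x. x \<otimes>\<^bsub>G\<^esub> g) v"

definition graph_act :: "('a, 'b) monoid_scheme \<Rightarrow> 'a option set set \<Rightarrow> 'a \<Rightarrow> 'a option set set" where
  "graph_act G F g = (\<lambda>e. (\<lambda>v. vact G v g) ` e) ` F"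

definition one_rotational_k_factorization ::
  "('a, 'b) monoid_scheme \<Rightarrow> nat \<Rightarrow> 'a option set set set \<Rightarrow> bool" where
  "one_rotational_k_factorization G k FF \<longleftrightarrow>
     is_k_factorization k (vert G) FF \<and>
     (\<forall>F\<in>FF. \<forall>g\<in>carrier G. graph_act G F g \<in> FF)"

definition G_stabilizer :: "('a, 'b) monoid_scheme \<Rightarrow> 'a option set set \<Rightarrow> 'a set" where
  "G_stabilizer G F = {g \<in> carrier G. graph_act G F g = F}"

definition involution :: "('a, 'b) monoid_scheme \<Rightarrow> 'a \<Rightarrow> bool" where
  "involution G t \<longleftrightarrow> t \<in> carrier G \<and> group.ord G t = 2"

end

theory Submission
  imports Defs
begin

lemma vact_comp:
  assumes "group G" "v \<in> vert G" "g \<in> carrier G" "h \<in> carrier G"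
  shows "vact G (vact G v g) h = vact G v (g \<otimes>\<^bsub>G\<^esub> h)"
  using assms by (auto simp: vact_def vert_def group.is_monoid monoid.m_assoc)

lemma vact_one:
  assumes "group G" "v \<in> vert G"
  shows "vact G v \<one>\<^bsub>G\<^esub> = v"
  using assms by (auto simp: vact_def vert_def group.is_monoid monoid.r_one)

lemma ga_comp:
  assumes "group G" "\<forall>e\<in>F. e \<subseteq> vert G" "g \<in> carrier G" "h \<in> carrier G"
  shows "graph_act G (graph_act G F g) h = graph_act G F (g \<otimes>\<^bsub>G\<^esub> h)"
proof -
  have "\<And>e. e \<in> F \<Longrightarrow> (\<lambda>v. vact G v h) ` (\<lambda>v. vact G v g) ` e = (\<lambda>v. vact G v (g \<otimes>\<^bsub>G\<^esub> h)) ` e"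
  proof -
    fix e assume "e \<in> F"
    then have "e \<subseteq> vert G" using assms(2) by blast
    then show "(\<lambda>v. vact G v h) ` (\<lambda>v. vact G v g) ` e = (\<lambda>v. vact G v (g \<otimes>\<^bsub>G\<^esub> h)) ` e"
      unfolding image_image using vact_comp[OF assms(1) _ assms(3,4)]
      by (auto intro!: image_cong)
  qed
  then show ?thesis unfolding graph_act_def image_image by (auto intro!: image_cong)
qed

lemma ga_one:
  assumes "group G" "\<forall>e\<in>F. e \<subseteq> vert G"
  shows "graph_act G F \<one>\<^bsub>G\<^esub> = F"
proof -
  have "\<And>e. e \<in> F \<Longrightarrow> (\<lambda>v. vact G v \<one>\<^bsub>G\<^esub>) ` e = e"
  proof -
    fix e assume "e \<in> F"
    then have "e \<subseteq> vert G" using assms(2) by blast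
    then have "\<And>v. v \<in> e \<Longrightarrow> vact G v \<one>\<^bsub>G\<^esub> = v" using vact_one[OF assms(1)] by blast
    then show "(\<lambda>v. vact G v \<one>\<^bsub>G\<^esub>) ` e = e"
      by (metis (no_types, lifting) image_cong image_ident)
  qed
  then show ?thesis unfolding graph_act_def by simp
qed

lemma ga_mem:
  "e \<in> F \<Longrightarrow> (\<lambda>v. vact G v g) ` e \<in> graph_act G F g"
  unfolding graph_act_def by blast

lemma finite_ce: "finite V \<Longrightarrow> finite (complete_edges V)"
proof -
  assume "finite V"
  have "complete_edges V \<subseteq> Pow V" unfolding complete_edges_def by auto
  then show ?thesis using \<open>finite V\<close> finite_subset by blast
qed

lemma inf_edge:
  assumes fin: "finite (carrier G)"
    and fac: "is_k_factor k (vert G) F" and ne: "F \<noteq> {}"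
  shows "\<exists>a\<in>carrier G. {None, Some a} \<in> F"
proof -
  have finV: "finite (vert G)" using fin unfolding vert_def by simp
  have sub: "F \<subseteq> complete_edges (vert G)" using fac unfolding is_k_factor_def by blast
  have finF: "finite F" using finite_subset[OF sub finite_ce[OF finV]] .
  obtain e where e: "e \<in> F" using ne by blast
  then obtain u v where uv: "u \<in> vert G" "v \<in> vert G" "u \<noteq> v" "e = {u,v}"
    using sub unfolding complete_edges_def by blast
  have "degree F u = k" using fac uv(1) unfolding is_k_factor_def by blast
  moreover have "{e \<in> F. u \<in> e} \<noteq> {}" using e uv by blast
  moreover have "finite {e \<in> F. u \<in> e}" using finF by simp
  ultimately have "k > 0" unfolding degree_def by (metis card_gt_0_iff)
  have "None \<in> vert G" unfolding vert_def by simp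
  then have "degree F None = k" using fac unfolding is_k_factor_def by blast
  with \<open>k > 0\<close> have "{e \<in> F. None \<in> e} \<noteq> {}" unfolding degree_def by (metis card.empty less_irrefl)
  then obtain e0 where e0: "e0 \<in> F" "None \<in> e0" by blast
  then obtain p q where pq: "p \<in> vert G" "q \<in> vert G" "p \<noteq> q" "e0 = {p,q}"
    using sub unfolding complete_edges_def by blast
  have "\<exists>w. w \<in> vert G \<and> w \<noteq> None \<and> e0 = {None, w}" 
  proof (cases "p = None")
    case True then show ?thesis using pq by (intro exI[of _ q]) auto
  next
    case False then have "q = None" using pq e0(2) by blast
    then show ?thesis using pq False by (intro exI[of _ p]) auto
  qed
  then obtain w where w: "w \<in> vert G" "w \<noteq> None" "e0 = {None, w}" by blast
  then obtain a where "a \<in> carrier G" "w = Some a" unfolding vert_def by blast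
  then show ?thesis using w e0 by blast
qed

theorem mainTheorem2:
  fixes G :: "('a, 'b) monoid_scheme" and k :: nat and FF :: "'a option set set set"
  assumes "group G"
    and "finite (carrier G)"
    and "even (order G)"
    and "one_rotational_k_factorization G k FF"
  shows "\<forall>F\<in>FF. \<forall>t. involution G t \<longrightarrow>
           (\<exists>x\<in>carrier G. inv\<^bsub>G\<^esub> x \<otimes>\<^bsub>G\<^esub> t \<otimes>\<^bsub>G\<^esub> x \<in> G_stabilizer G F)"
proof (intro ballI allI impI)
  fix F t
  assume F: "F \<in> FF" and inv: "involution G t"
  interpret group G by fact
  have t: "t \<in> carrier G" and ordt: "group.ord G t = 2" using inv unfolding involution_def by auto
  have tt: "t \<otimes>\<^bsub>G\<^esub> t = \<one>\<^bsub>G\<^esub>" using pow_ord_eq_1[OF t] ordt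
    by (metis nat_pow_Suc nat_pow_0 l_one t numeral_2_eq_2)
  have t1: "t \<noteq> \<one>\<^bsub>G\<^esub>" using ordt ord_eq_1[OF t] by auto
  have fact: "is_k_factorization k (vert G) FF" and rot: "\<forall>F\<in>FF. \<forall>g\<in>carrier G. graph_act G F g \<in> FF"
    using assms(4) unfolding one_rotational_k_factorization_def by auto
  have facs: "\<And>F. F \<in> FF \<Longrightarrow> is_k_factor k (vert G) F" using fact unfolding is_k_factorization_def by blast
  have edges: "\<And>F. F \<in> FF \<Longrightarrow> \<forall>e\<in>F. e \<subseteq> vert G"
    using facs unfolding is_k_factor_def complete_edges_def by blast
  have disj: "\<And>F1 F2 e. F1 \<in> FF \<Longrightarrow> F2 \<in> FF \<Longrightarrow> e \<in> F1 \<Longrightarrow> e \<in> F2 \<Longrightarrow> F1 = F2"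
    using fact unfolding is_k_factorization_def by blast
  show "\<exists>x\<in>carrier G. inv\<^bsub>G\<^esub> x \<otimes>\<^bsub>G\<^esub> t \<otimes>\<^bsub>G\<^esub> x \<in> G_stabilizer G F"
  proof (cases "F = {}")
    case True
    have "graph_act G F t = F" using True unfolding graph_act_def by simp
    then show ?thesis using t by (intro bexI[of _ "\<one>\<^bsub>G\<^esub>"]) (auto simp: G_stabilizer_def)
  next
    case False
    obtain a where a: "a \<in> carrier G" "{None, Some a} \<in> F"
      using inf_edge[OF assms(2) facs[OF F] False] by blast
    define m where "m = {Some \<one>\<^bsub>G\<^esub>, Some t}"
    have "m \<in> complete_edges (vert G)" unfolding m_def complete_edges_def vert_def
      using t t1 by auto
    then obtain F' where F': "F' \<in> FF" "m \<in> F'" using fact unfolding is_k_factorization_def by blast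
    then obtain b where b: "b \<in> carrier G" "{None, Some b} \<in> F'"
      using inf_edge[OF assms(2) facs[OF F'(1)]] by blast
    define g where "g = inv\<^bsub>G\<^esub> a \<otimes>\<^bsub>G\<^esub> b"
    have g: "g \<in> carrier G" using a b unfolding g_def by simp
    have "(\<lambda>v. vact G v g) ` {None, Some a} = {None, Some b}"
      unfolding vact_def g_def using a b by (simp add: m_assoc[symmetric])
    then have "{None, Some b} \<in> graph_act G F g" using ga_mem[OF a(2), of G g] by simp
    then have Fg: "graph_act G F g = F'" using disj[OF rot[rule_format, OF F g] F'(1) _ b(2)] by blast
    have "(\<lambda>v. vact G v t) ` m = m"
      unfolding vact_def m_def using t tt by auto
    then have "m \<in> graph_act G F' t" using ga_mem[OF F'(2), of G t] by simp
    then have F't: "graph_act G F' t = F'" using disj[OF rot[rule_format, OF F'(1) t] F'(1) _ F'(2)] by blast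
    have ig: "inv\<^bsub>G\<^esub> g \<in> carrier G" using g by simp
    have e': "\<forall>e\<in>graph_act G F g. e \<subseteq> vert G" using edges rot F g by blast
    have "graph_act G F (g \<otimes>\<^bsub>G\<^esub> t \<otimes>\<^bsub>G\<^esub> inv\<^bsub>G\<^esub> g) = graph_act G (graph_act G (graph_act G F g) t) (inv\<^bsub>G\<^esub> g)"
      using ga_comp[OF assms(1) edges[OF F] g t] ga_comp[OF assms(1) edges[OF F] _ ig] g t
      by simp
    also have "\<dots> = graph_act G (graph_act G F g) (inv\<^bsub>G\<^esub> g)" using Fg F't by simp
    also have "\<dots> = F" using ga_comp[OF assms(1) edges[OF F] g ig] g ga_one[OF assms(1) edges[OF F]] by simp
    finally have "g \<otimes>\<^bsub>G\<^esub> t \<otimes>\<^bsub>G\<^esub> inv\<^bsub>G\<^esub> g \<in> G_stabilizer G F" unfolding G_stabilizer_def using g t by simp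
    then show ?thesis using ig g by (intro bexI[of _ "inv\<^bsub>G\<^esub> g"]) auto
  qed
qed

end
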